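(* Consider the heterogeneous cone percolation process on $\mathbb{T}_d^+$. If for some positive integer $n$ $$\liminf_{j\to\infty}\ d^n\prod_{k=0}^{n-1}\Big[1-\prod_{i=0}^{k}\mathbb{P}[R_{jn+i}<k+1-i]\Big] > 1,$$ then with positive probability the set $I$ of vertices reached from $\mathcal{O}$ is infinite (the process has a giant component with positive probability).
   Context: Let $d\ge2$, let $\mathbb{T}_d$ be the infinite tree in which every vertex has $d+1$ neighbours, with a fixed origin $\mathcal{O}$; $d(u,v)$ is graph distance and $u\le v$ means $u$ lies on the path from $\mathcal{O}$ to $v$. Fix a neighbour $w$ of $\mathcal{O}$ and let $\mathbb{T}_d^+$ be the subtree obtained by deleting all $x$ with $w\le x$; every vertex of $\mathbb{T}_d^+$ has exactly $d$ children. Heterogeneous cone percolation on $\mathbb{T}_d^+$: let $(R_z)_{z\in\mathbb{N}}$ be independent random variables with values in $\{0,1,2,\dots\}$ and $\mathbb{P}[R_z=0]<1$ for all $z$; let $(\bar R_u)_{u\in\mathbb{T}_d^+}$ be independent random variables with $\bar R_u$ distributed as $R_{d(\mathcal{O},u)}$. Let $B_u=\{v\in\mathbb{T}_d^+: u\le v,\ d(u,v)\le \bar R_u\}$, $I_0=\{\mathcal{O}\}$, $I_{m+1}=\bigcup_{x\in I_m}B_x$, $I=\bigcup_{m\ge0}I_m$. *)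

theory Defs
  imports "HOL-Probability.Probability" "HOL-Library.Sublist"
begin

text \<open>Vertices of the rooted tree T_d^+ in which every vertex has exactly d children:
  finite words over the alphabet {0..<d}. The origin is the empty word, the children of u
  are u @ [a] for a < d, u \<le> v is "u is a prefix of v", d(O,u) = length u, and for
  u \<le> v the graph distance is d(u,v) = length v - length u.\<close>
definition tree_vertices :: "nat \<Rightarrow> nat list set" where
  "tree_vertices d = {u. \<forall>a\<in>set u. a < d}"

text \<open>The set I of vertices reached from the origin, for a given realisation r u of the
  radii Rbar_u: the least set containing the origin and closed under adding the cones
  B_x = {v. x \<le> v, d(x,v) \<le> r x} of its members (this is the union of the I_m).\<close>
inductive_set cone_reached :: "nat \<Rightarrow> (nat list \<Rightarrow> nat) \<Rightarrow> nat list set"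
  for d :: nat and r :: "nat list \<Rightarrow> nat" where
  origin: "[] \<in> cone_reached d r"
| cone: "\<lbrakk>x \<in> cone_reached d r; v \<in> tree_vertices d; prefix x v; length v - length x \<le> r x\<rbrakk>
          \<Longrightarrow> v \<in> cone_reached d r"

end

theory Submission imports Defs begin

definition reach :: "(nat list \<Rightarrow> nat) \<Rightarrow> nat list \<Rightarrow> bool" where
  "reach r v \<longleftrightarrow> (\<forall>k<length v. \<exists>i\<le>k. k + 1 - i \<le> r (take i v))"

lemma tree_take: "v \<in> tree_vertices d \<Longrightarrow> take i v \<in> tree_vertices d"
  unfolding tree_vertices_def by (auto dest: in_set_takeD)

lemma cr_reach: "v \<in> cone_reached d r \<Longrightarrow> v \<in> tree_vertices d \<and> reach r v"
proof (induction rule: cone_reached.induct)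
  case origin
  then show ?case by (simp add: tree_vertices_def reach_def)
next
  case (cone x v)
  then obtain y where v: "v = x @ y" by (auto simp: prefix_def)
  have "reach r v"
    unfolding reach_def
  proof (intro allI impI)
    fix k assume k: "k < length v"
    show "\<exists>i\<le>k. k + 1 - i \<le> r (take i v)"
    proof (cases "k < length x")
      case True
      with cone.IH obtain i where "i \<le> k" "k + 1 - i \<le> r (take i x)"
        unfolding reach_def by blast
      then show ?thesis using True v by (intro exI[of _ i]) auto
    next
      case False
      then show ?thesis using cone.hyps k v
        by (intro exI[of _ "length x"]) auto
    qed
  qed
  then show ?case using cone by auto
qed

lemma reach_cr_aux:
  assumes "v \<in> tree_vertices d" "reach r v"
  shows "k \<le> length v \<Longrightarrow> take k v \<in> cone_reached d r"
proof (induction k rule: less_induct)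
  case (less k)
  show ?case
  proof (cases k)
    case 0
    then show ?thesis by (simp add: cone_reached.origin)
  next
    case (Suc k')
    then have "k' < length v" using less by simp
    then obtain i where i: "i \<le> k'" "k' + 1 - i \<le> r (take i v)"
      using assms(2) unfolding reach_def by blast
    have "take i v \<in> cone_reached d r" using less i Suc by simp
    moreover have "prefix (take i v) (take k v)"
      using i Suc by (metis Suc_leD Suc_le_mono min.absorb1 prefix_order.eq_iff take_is_prefix take_take)
    moreover have "take k v \<in> tree_vertices d" using assms(1) by (rule tree_take)
    moreover have "length (take k v) - length (take i v) \<le> r (take i v)"
      using i Suc less.prems by simp
    ultimately show ?thesis
      by (blast intro: cone_reached.cone)
  qed
qed

lemma cr_iff: "v \<in> cone_reached d r \<longleftrightarrow> v \<in> tree_vertices d \<and> reach r v"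
  using cr_reach reach_cr_aux[of v d r "length v"] by auto

lemma reach_take: "reach r v \<Longrightarrow> reach r (take m v)"
  unfolding reach_def
proof (intro allI impI)
  fix k assume R: "\<forall>k<length v. \<exists>i\<le>k. k + 1 - i \<le> r (take i v)" and k: "k < length (take m v)"
  then obtain i where i: "i \<le> k" "k + 1 - i \<le> r (take i v)" by auto
  have "take i (take m v) = take i v" using i k by (simp add: take_take min_def split: if_splits)
  then show "\<exists>i\<le>k. k + 1 - i \<le> r (take i (take m v))" using i by metis
qed

lemma finite_tree_le: "finite {v \<in> tree_vertices d. length v \<le> m}"
proof -
  have "{v \<in> tree_vertices d. length v \<le> m} \<subseteq> {xs. set xs \<subseteq> {..<d} \<and> length xs \<le> m}"
    by (auto simp: tree_vertices_def)
  then show ?thesis using finite_lists_length_le[of "{..<d}" m] finite_subset by blast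
qed

lemma infinite_iff:
  "infinite (cone_reached d r) \<longleftrightarrow> (\<forall>m. \<exists>v\<in>tree_vertices d. length v = m \<and> reach r v)"
proof
  assume inf: "infinite (cone_reached d r)"
  show "\<forall>m. \<exists>v\<in>tree_vertices d. length v = m \<and> reach r v"
  proof
    fix m
    have "\<not> cone_reached d r \<subseteq> {v \<in> tree_vertices d. length v \<le> m}"
      using inf finite_tree_le finite_subset by blast
    then obtain v where v0: "v \<in> cone_reached d r" "v \<notin> {v \<in> tree_vertices d. length v \<le> m}"
      by blast
    then have v: "v \<in> cone_reached d r" "length v > m" using cr_iff by auto
    then show "\<exists>v\<in>tree_vertices d. length v = m \<and> reach r v"
    proof (intro bexI[of _ "take m v"] conjI)
      show "take m v \<in> tree_vertices d" using cr_iff[of v d r] v tree_take by blast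
      show "length (take m v) = m" using v by simp
      show "reach r (take m v)" using cr_iff[of v d r] v reach_take by blast
    qed
  qed
next
  assume H: "\<forall>m. \<exists>v\<in>tree_vertices d. length v = m \<and> reach r v"
  show "infinite (cone_reached d r)"
  proof
    assume fin: "finite (cone_reached d r)"
    define m where "m = Suc (Max (length ` cone_reached d r))"
    obtain v where "v \<in> tree_vertices d" "length v = m" "reach r v" using H by blast
    then have "v \<in> cone_reached d r" using cr_iff by blast
    then have "length v \<le> Max (length ` cone_reached d r)" using fin by simp
    then show False using \<open>length v = m\<close> m_def by simp
  qed
qed

definition W :: "nat \<Rightarrow> nat \<Rightarrow> nat list set" where
  "W d n = {w \<in> tree_vertices d. length w = n}"

definition Eb :: "nat \<Rightarrow> (nat list \<Rightarrow> nat) \<Rightarrow> nat list \<Rightarrow> nat list \<Rightarrow> bool" where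
  "Eb n r u w \<longleftrightarrow> (\<forall>k<n. \<exists>i\<le>k. k + 1 - i \<le> r (u @ take i w))"

fun G :: "nat \<Rightarrow> nat \<Rightarrow> nat \<Rightarrow> (nat list \<Rightarrow> nat) \<Rightarrow> nat list \<Rightarrow> bool" where
  "G d n 0 r u = True"
| "G d n (Suc m) r u = (\<exists>w\<in>W d n. Eb n r u w \<and> G d n m r (u @ w))"

definition Tset :: "nat \<Rightarrow> nat \<Rightarrow> nat \<Rightarrow> nat list \<Rightarrow> nat list set" where
  "Tset d n m u = (\<lambda>x. u @ x) ` {x \<in> tree_vertices d. length x < m * n}"

lemma W_eq: "W d n = {xs. set xs \<subseteq> {..<d} \<and> length xs = n}"
  by (auto simp: W_def tree_vertices_def)

lemma finite_W: "finite (W d n)"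
proof -
  have "W d n \<subseteq> {v \<in> tree_vertices d. length v \<le> n}" by (auto simp: W_def)
  then show ?thesis using finite_tree_le finite_subset by blast
qed

lemma card_W: "card (W d n) = d ^ n"
  unfolding W_eq using card_lists_length_eq[of "{..<d}" n] by simp

lemma finite_Tset: "finite (Tset d n m u)"
proof -
  have "{x \<in> tree_vertices d. length x < m * n} \<subseteq> {v \<in> tree_vertices d. length v \<le> m * n}" by auto
  then show ?thesis unfolding Tset_def using finite_tree_le finite_subset by blast
qed

lemma tree_append: "u \<in> tree_vertices d \<Longrightarrow> x \<in> tree_vertices d \<Longrightarrow> u @ x \<in> tree_vertices d"
  by (auto simp: tree_vertices_def)

lemma Tset_sub: "u \<in> tree_vertices d \<Longrightarrow> Tset d n m u \<subseteq> tree_vertices d"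
  unfolding Tset_def using tree_append by blast

lemma Tset_len: "v \<in> Tset d n m u \<Longrightarrow> length u \<le> length v \<and> length v < length u + m * n"
  unfolding Tset_def by auto

lemma Tset_disj:
  assumes "w \<in> W d n" "w' \<in> W d n" "w \<noteq> w'"
  shows "Tset d n m (u @ w) \<inter> Tset d n m' (u @ w') = {}"
proof (rule ccontr)
  assume "Tset d n m (u @ w) \<inter> Tset d n m' (u @ w') \<noteq> {}"
  then obtain x x' where "u @ w @ x = u @ w' @ x'" unfolding Tset_def by auto
  then have "w @ x = w' @ x'" by simp
  then have "take n (w @ x) = take n (w' @ x')" by simp
  then show False using assms by (simp add: W_def)
qed

lemma Tset_disj1:
  assumes "w \<in> W d n"
  shows "Tset d n 1 u \<inter> Tset d n m (u @ w) = {}"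
  using Tset_len[of _ d n 1 u] Tset_len[of _ d n m "u @ w"] assms by (fastforce simp: W_def)

lemma reach_Eb:
  assumes "reach r u" "length w = n" "Eb n r u w"
  shows "reach r (u @ w)"
  unfolding reach_def
proof (intro allI impI)
  fix k assume k: "k < length (u @ w)"
  show "\<exists>i\<le>k. k + 1 - i \<le> r (take i (u @ w))"
  proof (cases "k < length u")
    case True
    with assms(1) obtain i where "i \<le> k" "k + 1 - i \<le> r (take i u)"
      unfolding reach_def by blast
    then show ?thesis using True by (intro exI[of _ i]) auto
  next
    case False
    define k' where "k' = k - length u"
    have k': "k' < n" using k False assms(2) by (simp add: k'_def)
    then obtain i where i: "i \<le> k'" "k' + 1 - i \<le> r (u @ take i w)"
      using assms(3) unfolding Eb_def by blast
    have "take (length u + i) (u @ w) = u @ take i w" by simp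
    then show ?thesis using i False k'_def
      by (intro exI[of _ "length u + i"]) auto
  qed
qed

lemma G_reach:
  "u \<in> tree_vertices d \<Longrightarrow> reach r u \<Longrightarrow> G d n m r u \<Longrightarrow>
   \<exists>v\<in>tree_vertices d. length v = length u + m * n \<and> reach r v"
proof (induction m arbitrary: u)
  case 0
  then show ?case by auto
next
  case (Suc m)
  then obtain w where w: "w \<in> W d n" "Eb n r u w" "G d n m r (u @ w)" by auto
  have "u @ w \<in> tree_vertices d" using w Suc.prems tree_append by (auto simp: W_def)
  moreover have "reach r (u @ w)" using reach_Eb Suc.prems w by (auto simp: W_def)
  ultimately obtain v where "v \<in> tree_vertices d" "length v = length (u @ w) + m * n" "reach r v"
    using Suc.IH w by blast
  then show ?case using w by (intro bexI[of _ v]) (auto simp: W_def)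
qed

lemma G_mono: "G d n (Suc m) r u \<Longrightarrow> G d n m r u"
proof (induction m arbitrary: u)
  case 0
  then show ?case by simp
next
  case (Suc m)
  from Suc.prems obtain w where w: "w \<in> W d n" "Eb n r u w" "G d n (Suc m) r (u @ w)"
    by (simp only: G.simps) blast
  then have "G d n m r (u @ w)" using Suc.IH by blast
  then show ?case using w by (simp only: G.simps) blast
qed

lemma G_local: "(\<And>v. v \<in> Tset d n m u \<Longrightarrow> r v = r' v) \<Longrightarrow> G d n m r u = G d n m r' u"
proof (induction m arbitrary: u)
  case 0
  then show ?case by simp
next
  case (Suc m)
  have E: "Eb n r u w = Eb n r' u w" if w: "w \<in> W d n" for w
  proof -
    have "r (u @ take i w) = r' (u @ take i w)" if "i < n" for i
    proof -
      have "take i w \<in> {x \<in> tree_vertices d. length x < Suc m * n}"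
        using w that by (auto simp: W_def tree_take)
      then show ?thesis using Suc.prems unfolding Tset_def by blast
    qed
    then show ?thesis unfolding Eb_def by (metis le_less_trans)
  qed
  have T: "G d n m r (u @ w) = G d n m r' (u @ w)" if w: "w \<in> W d n" for w
  proof (rule Suc.IH)
    fix v assume "v \<in> Tset d n m (u @ w)"
    then obtain x where x: "x \<in> tree_vertices d" "length x < m * n" "v = u @ w @ x"
      unfolding Tset_def by auto
    then have "v \<in> Tset d n (Suc m) u" using w unfolding Tset_def W_def
      by (auto intro!: image_eqI[of _ _ "w @ x"] tree_append)
    then show "r v = r' v" by (rule Suc.prems)
  qed
  show ?case using E T by auto
qed

lemma Eb_local: "w \<in> W d n \<Longrightarrow> (\<And>v. v \<in> Tset d n 1 u \<Longrightarrow> r v = r' v) \<Longrightarrow> Eb n r u w = Eb n r' u w"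
proof -
  assume w: "w \<in> W d n" and H: "\<And>v. v \<in> Tset d n 1 u \<Longrightarrow> r v = r' v"
  have "r (u @ take i w) = r' (u @ take i w)" if "i < n" for i
  proof -
    have "take i w \<in> {x \<in> tree_vertices d. length x < 1 * n}"
      using w that by (auto simp: W_def tree_take)
    then show ?thesis using H unfolding Tset_def by blast
  qed
  then show ?thesis unfolding Eb_def by (metis le_less_trans)
qed

definition local :: "'i set \<Rightarrow> (('i \<Rightarrow> nat) \<Rightarrow> bool) \<Rightarrow> bool" where
  "local S P \<longleftrightarrow> (\<forall>r r'. (\<forall>v\<in>S. r v = r' v) \<longrightarrow> P r = P r')"

lemma localI: "(\<And>r r'. (\<And>v. v \<in> S \<Longrightarrow> r v = r' v) \<Longrightarrow> P r = P r') \<Longrightarrow> local S P"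
  unfolding local_def by blast

lemma local_restrict: "local S P \<Longrightarrow> P (restrict r S) = P r"
  unfolding local_def by auto

lemma pim_sets:
  fixes K :: "'i set"
  assumes "finite K" "A \<subseteq> space (PiM K (\<lambda>_. count_space (UNIV::nat set)))"
  shows "A \<in> sets (PiM K (\<lambda>_. count_space (UNIV::nat set)))"
  using assms by (simp add: count_space_PiM_finite)

locale indep_nat = prob_space M for M :: "'a measure" +
  fixes X :: "'i \<Rightarrow> 'a \<Rightarrow> nat" and I :: "'i set"
  assumes ind: "indep_vars (\<lambda>_. count_space UNIV) X I"
begin

lemma X_meas: "i \<in> I \<Longrightarrow> X i \<in> measurable M (count_space UNIV)"
  using ind unfolding indep_vars_def by auto

lemma restrict_meas:
  assumes "finite K" "K \<subseteq> I"
  shows "(\<lambda>\<omega>. restrict (\<lambda>i. X i \<omega>) K) \<in> measurable M (PiM K (\<lambda>_. count_space UNIV))"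
  using assms X_meas by (intro measurable_restrict) auto

lemma ev_meas:
  assumes "finite K" "K \<subseteq> I" "local K P"
  shows "{\<omega>\<in>space M. P (\<lambda>i. X i \<omega>)} \<in> events"
proof -
  let ?f = "\<lambda>\<omega>. restrict (\<lambda>i. X i \<omega>) K"
  let ?A = "{f \<in> space (PiM K (\<lambda>_. count_space (UNIV::nat set))). P f}"
  have "?f -` ?A \<inter> space M \<in> events"
    by (rule measurable_sets[OF restrict_meas[OF assms(1,2)] pim_sets[OF assms(1)]]) auto
  moreover have "?f -` ?A \<inter> space M = {\<omega>\<in>space M. P (\<lambda>i. X i \<omega>)}"
    using measurable_space[OF restrict_meas[OF assms(1,2)]] local_restrict[OF assms(3)] by auto
  ultimately show ?thesis by simp
qed

lemma IND:
  fixes L :: "'l set" and K :: "'l \<Rightarrow> 'i set" and \<Phi> :: "'l \<Rightarrow> ('i \<Rightarrow> nat) \<Rightarrow> bool"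
  assumes L: "finite L" "L \<noteq> {}"
    and K: "\<And>l. l \<in> L \<Longrightarrow> K l \<subseteq> I" "\<And>l. l \<in> L \<Longrightarrow> finite (K l)"
    and disj: "disjoint_family_on K L"
    and loc: "\<And>l. l \<in> L \<Longrightarrow> local (K l) (\<Phi> l)"
  shows "prob {\<omega>\<in>space M. \<forall>l\<in>L. \<Phi> l (\<lambda>i. X i \<omega>)} = (\<Prod>l\<in>L. prob {\<omega>\<in>space M. \<Phi> l (\<lambda>i. X i \<omega>)})"
proof -
  have 1: "indep_vars (\<lambda>l. PiM (K l) (\<lambda>_. count_space UNIV)) (\<lambda>l \<omega>. restrict (\<lambda>i. X i \<omega>) (K l)) L"
    using indep_vars_restrict[OF ind, of L K] K(1) disj by blast
  have meas: "\<Phi> l \<in> measurable (PiM (K l) (\<lambda>_. count_space UNIV)) (count_space UNIV)" if "l \<in> L" for l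
    unfolding measurable_count_space_eq2_countable
  proof (intro conjI ballI)
    show "\<Phi> l \<in> space (Pi\<^sub>M (K l) (\<lambda>_. count_space UNIV)) \<rightarrow> UNIV" by simp
    fix a :: bool
    show "\<Phi> l -` {a} \<inter> space (Pi\<^sub>M (K l) (\<lambda>_. count_space UNIV)) \<in> sets (Pi\<^sub>M (K l) (\<lambda>_. count_space UNIV))"
      by (rule pim_sets[OF K(2)[OF that]]) blast
  qed
  have 2: "indep_vars (\<lambda>_. count_space UNIV) (\<lambda>l \<omega>. \<Phi> l (restrict (\<lambda>i. X i \<omega>) (K l))) L"
    by (rule indep_vars_compose2[OF 1 meas])
  have 3: "prob (\<Inter>l\<in>L. (\<lambda>\<omega>. \<Phi> l (restrict (\<lambda>i. X i \<omega>) (K l))) -` {True} \<inter> space M) =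
      (\<Prod>l\<in>L. prob ((\<lambda>\<omega>. \<Phi> l (restrict (\<lambda>i. X i \<omega>) (K l))) -` {True} \<inter> space M))"
    by (rule indep_varsD[OF 2 L(2) L(1)]) simp_all
  have e1: "(\<lambda>\<omega>. \<Phi> l (restrict (\<lambda>i. X i \<omega>) (K l))) -` {True} \<inter> space M = {\<omega>\<in>space M. \<Phi> l (\<lambda>i. X i \<omega>)}"
    if "l \<in> L" for l
    using local_restrict[OF loc[OF that]] by blast
  have e2: "(\<Inter>l\<in>L. (\<lambda>\<omega>. \<Phi> l (restrict (\<lambda>i. X i \<omega>) (K l))) -` {True} \<inter> space M) =
      {\<omega>\<in>space M. \<forall>l\<in>L. \<Phi> l (\<lambda>i. X i \<omega>)}"
    using e1 L(2) by blast
  have e3: "(\<Prod>l\<in>L. prob ((\<lambda>\<omega>. \<Phi> l (restrict (\<lambda>i. X i \<omega>) (K l))) -` {True} \<inter> space M)) =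
     (\<Prod>l\<in>L. prob {\<omega>\<in>space M. \<Phi> l (\<lambda>i. X i \<omega>)})"
    using e1 by (intro prod.cong) auto
  show ?thesis using 3 e2 e3 by simp
qed

lemma IND2:
  assumes "finite K1" "finite K2" "K1 \<subseteq> I" "K2 \<subseteq> I" "K1 \<inter> K2 = {}" "local K1 P1" "local K2 P2"
  shows "prob {\<omega>\<in>space M. P1 (\<lambda>i. X i \<omega>) \<and> P2 (\<lambda>i. X i \<omega>)} =
    prob {\<omega>\<in>space M. P1 (\<lambda>i. X i \<omega>)} * prob {\<omega>\<in>space M. P2 (\<lambda>i. X i \<omega>)}"
proof -
  have "prob {\<omega>\<in>space M. \<forall>l\<in>UNIV. (\<lambda>b. if b then P1 else P2) l (\<lambda>i. X i \<omega>)} =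
    (\<Prod>l\<in>UNIV. prob {\<omega>\<in>space M. (\<lambda>b. if b then P1 else P2) l (\<lambda>i. X i \<omega>)})"
    by (rule IND[where K="\<lambda>b. if b then K1 else K2"])
       (use assms in \<open>auto simp: disjoint_family_on_def\<close>)
  moreover have "{\<omega>\<in>space M. \<forall>l\<in>UNIV. (\<lambda>b. if b then P1 else P2) l (\<lambda>i. X i \<omega>)} =
     {\<omega>\<in>space M. P1 (\<lambda>i. X i \<omega>) \<and> P2 (\<lambda>i. X i \<omega>)}"
    by (auto simp: UNIV_bool)
  ultimately show ?thesis by (simp add: UNIV_bool mult.commute)
qed

lemma PART:
  assumes "finite T" "A \<in> events" "\<And>t. t \<in> T \<Longrightarrow> {\<omega>\<in>space M. Y \<omega> = t} \<in> events"
    "\<And>\<omega>. \<omega> \<in> space M \<Longrightarrow> Y \<omega> \<in> T"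
  shows "prob A = (\<Sum>t\<in>T. prob (A \<inter> {\<omega>\<in>space M. Y \<omega> = t}))"
proof -
  have "A = (\<Union>t\<in>T. A \<inter> {\<omega>\<in>space M. Y \<omega> = t})"
    using assms(4) sets.sets_into_space[OF assms(2)] by auto
  then have "prob A = prob (\<Union>t\<in>T. A \<inter> {\<omega>\<in>space M. Y \<omega> = t})" by simp
  also have "\<dots> = (\<Sum>t\<in>T. prob (A \<inter> {\<omega>\<in>space M. Y \<omega> = t}))"
    using assms by (intro finite_measure_finite_Union) (auto simp: disjoint_family_on_def)
  finally show ?thesis .
qed

end

lemma cheb2:
  fixes y f g :: "nat \<Rightarrow> real"
  assumes "finite A" "\<And>a. a \<in> A \<Longrightarrow> 0 \<le> y a" "sum y A = 1" "mono f" "mono g"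
  shows "(\<Sum>a\<in>A. y a * f a) * (\<Sum>a\<in>A. y a * g a) \<le> (\<Sum>a\<in>A. y a * (f a * g a))"
proof -
  have t: "0 \<le> (f a - f b) * (g a - g b)" for a b
  proof (cases "a \<le> b")
    case True
    then show ?thesis using assms(4,5) by (intro mult_nonpos_nonpos) (auto dest: monoD)
  next
    case False
    then have "b \<le> a" by simp
    then show ?thesis using assms(4,5) by (intro mult_nonneg_nonneg) (auto dest: monoD)
  qed
  have "0 \<le> (\<Sum>a\<in>A. \<Sum>b\<in>A. y a * y b * ((f a - f b) * (g a - g b)))"
    using assms(2) t by (intro sum_nonneg) (metis mult_nonneg_nonneg)
  also have "\<dots> = (\<Sum>a\<in>A. y a * (f a * g a)) * sum y A + sum y A * (\<Sum>b\<in>A. y b * (f b * g b))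
      - (\<Sum>a\<in>A. y a * f a) * (\<Sum>b\<in>A. y b * g b) - (\<Sum>a\<in>A. y a * g a) * (\<Sum>b\<in>A. y b * f b)"
  proof -
    have eq: "\<And>a b. y a * y b * ((f a - f b) * (g a - g b)) = (y a * (f a * g a)) * y b + y a * (y b * (f b * g b))
       - (y a * f a) * (y b * g b) - (y a * g a) * (y b * f b)"
      by (simp add: algebra_simps)
    show ?thesis by (simp only: eq sum.distrib sum_subtractf sum_product)
  qed
  also have "\<dots> = 2 * (\<Sum>a\<in>A. y a * (f a * g a)) - 2 * ((\<Sum>a\<in>A. y a * f a) * (\<Sum>a\<in>A. y a * g a))"
    using assms(3) by simp
  finally show ?thesis by simp
qed

lemma chebK:
  fixes y :: "nat \<Rightarrow> real" and h :: "'k \<Rightarrow> nat \<Rightarrow> real"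
  assumes "finite A" "\<And>a. a \<in> A \<Longrightarrow> 0 \<le> y a" "sum y A = 1"
    and "\<And>k. mono (h k)" "\<And>k a. 0 \<le> h k a" "finite K"
  shows "(\<Prod>k\<in>K. \<Sum>a\<in>A. y a * h k a) \<le> (\<Sum>a\<in>A. y a * (\<Prod>k\<in>K. h k a))"
  using assms(6)
proof (induction K rule: finite_induct)
  case empty
  then show ?case using assms(3) by simp
next
  case (insert k K)
  have m: "mono (\<lambda>a. \<Prod>k\<in>K. h k a)"
    using assms(4,5) by (intro monoI prod_mono) (auto dest: monoD)
  have "(\<Prod>k\<in>insert k K. \<Sum>a\<in>A. y a * h k a) = (\<Sum>a\<in>A. y a * h k a) * (\<Prod>k\<in>K. \<Sum>a\<in>A. y a * h k a)"
    using insert by simp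
  also have "\<dots> \<le> (\<Sum>a\<in>A. y a * h k a) * (\<Sum>a\<in>A. y a * (\<Prod>k\<in>K. h k a))"
    using insert.IH assms(2,5) by (intro mult_left_mono sum_nonneg mult_nonneg_nonneg) auto
  also have "\<dots> \<le> (\<Sum>a\<in>A. y a * (h k a * (\<Prod>k\<in>K. h k a)))"
    by (rule cheb2[OF assms(1,2,3) assms(4) m])
  also have "\<dots> = (\<Sum>a\<in>A. y a * (\<Prod>k\<in>insert k K. h k a))"
    using insert by simp
  finally show ?case .
qed


lemma local_mono: "local S P \<Longrightarrow> S \<subseteq> S' \<Longrightarrow> local S' P"
  unfolding local_def by blast

lemma local_ball: "(\<And>k. k \<in> K \<Longrightarrow> local S (P k)) \<Longrightarrow> local S (\<lambda>r. \<forall>k\<in>K. P k r)"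
  unfolding local_def by blast

lemma local_conj: "local S P \<Longrightarrow> local S Q \<Longrightarrow> local S (\<lambda>r. P r \<and> Q r)"
  unfolding local_def by blast

definition HA :: "(nat \<Rightarrow> 'i) \<Rightarrow> nat \<Rightarrow> nat \<Rightarrow> ('i \<Rightarrow> nat) \<Rightarrow> bool" where
  "HA \<pi> s k r \<longleftrightarrow> (\<exists>i. s \<le> i \<and> i \<le> k \<and> k + 1 - i \<le> r (\<pi> i))"

lemma HA_local: "k < n \<Longrightarrow> local (\<pi> ` {s..<n}) (HA \<pi> s k)"
  unfolding local_def HA_def
proof (intro allI impI)
  fix r r' :: "'a \<Rightarrow> nat" assume k: "k < n" and eq: "\<forall>v\<in>\<pi> ` {s..<n}. r v = r' v"
  have "r (\<pi> i) = r' (\<pi> i)" if "s \<le> i" "i \<le> k" for i using eq that k by auto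
  then show "(\<exists>i\<ge>s. i \<le> k \<and> k + 1 - i \<le> r (\<pi> i)) = (\<exists>i\<ge>s. i \<le> k \<and> k + 1 - i \<le> r' (\<pi> i))"
    by metis
qed

lemma HA_step:
  assumes "s < n" "k < n"
  shows "HA \<pi> s k r \<longleftrightarrow> (s \<le> k \<and> k + 1 - s \<le> min n (r (\<pi> s))) \<or> HA \<pi> (Suc s) k r"
proof -
  have "HA \<pi> s k r \<longleftrightarrow> (s \<le> k \<and> k + 1 - s \<le> r (\<pi> s)) \<or> HA \<pi> (Suc s) k r"
  proof
    assume "HA \<pi> s k r"
    then obtain i where i: "s \<le> i" "i \<le> k" "k + 1 - i \<le> r (\<pi> i)" unfolding HA_def by blast
    show "(s \<le> k \<and> k + 1 - s \<le> r (\<pi> s)) \<or> HA \<pi> (Suc s) k r"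
    proof (cases "i = s")
      case True
      then show ?thesis using i by simp
    next
      case False
      then have "Suc s \<le> i" using i by simp
      then show ?thesis using i unfolding HA_def by blast
    qed
  next
    assume "(s \<le> k \<and> k + 1 - s \<le> r (\<pi> s)) \<or> HA \<pi> (Suc s) k r"
    then show "HA \<pi> s k r"
    proof
      assume "s \<le> k \<and> k + 1 - s \<le> r (\<pi> s)"
      then show ?thesis unfolding HA_def by blast
    next
      assume "HA \<pi> (Suc s) k r"
      then obtain i where i: "Suc s \<le> i" "i \<le> k" "k + 1 - i \<le> r (\<pi> i)" unfolding HA_def by blast
      then have "s \<le> i" by simp
      then show ?thesis using i unfolding HA_def by blast
    qed
  qed
  moreover have "k + 1 - s \<le> r (\<pi> s) \<longleftrightarrow> k + 1 - s \<le> min n (r (\<pi> s))"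
    using assms by auto
  ultimately show ?thesis by blast
qed

context indep_nat
begin

lemma prob_space_eq: "prob {\<omega>\<in>space M. True} = 1"
  by (simp add: prob_space)

lemma harris:
  assumes \<pi>: "\<pi> ` {..<n} \<subseteq> I" "inj_on \<pi> {..<n}"
  shows "s \<le> n \<Longrightarrow> K \<subseteq> {..<n} \<Longrightarrow>
    (\<Prod>k\<in>K. prob {\<omega>\<in>space M. HA \<pi> s k (\<lambda>i. X i \<omega>)}) \<le> prob {\<omega>\<in>space M. \<forall>k\<in>K. HA \<pi> s k (\<lambda>i. X i \<omega>)}"
proof (induction "n - s" arbitrary: s K)
  case 0
  then have s: "s = n" by simp
  show ?case
  proof (cases "K = {}")
    case True
    then show ?thesis by (simp add: prob_space)
  next
    case False
    then obtain k where k: "k \<in> K" by blast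
    have fin: "finite K" using 0 finite_subset by blast
    have ee: "{\<omega>\<in>space M. HA \<pi> s k (\<lambda>i. X i \<omega>)} = {}"
      using k 0 s by (auto simp: HA_def)
    have e: "prob {\<omega>\<in>space M. HA \<pi> s k (\<lambda>i. X i \<omega>)} = 0" by (subst ee) (rule measure_empty)
    have "(\<Prod>k\<in>K. prob {\<omega>\<in>space M. HA \<pi> s k (\<lambda>i. X i \<omega>)}) = 0"
      by (rule prod_zero[OF fin bexI[where x=k and P="\<lambda>k. prob {\<omega>\<in>space M. HA \<pi> s k (\<lambda>i. X i \<omega>)} = 0", OF e k]])
    then show ?thesis by simp
  qed
next
  case (Suc m)
  have sn: "s < n" using Suc by simp
  define ev where "ev K' s' = {\<omega>\<in>space M. \<forall>k\<in>K'. HA \<pi> s' k (\<lambda>i. X i \<omega>)}" for K' s'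
  define y where "y a = prob {\<omega>\<in>space M. min n (X (\<pi> s) \<omega>) = a}" for a
  define Ka where "Ka K' a = {k \<in> K'. \<not> (s \<le> k \<and> k + 1 - s \<le> a)}" for K' a
  have fin\<pi>: "finite (\<pi> ` {s'..<n})" for s' by simp
  have sub\<pi>: "\<pi> ` {s'..<n} \<subseteq> I" for s' using \<pi>(1) by auto
  have ev_meas': "ev K' s' \<in> events" if "K' \<subseteq> {..<n}" for K' s'
    unfolding ev_def
    by (rule ev_meas[OF fin\<pi> sub\<pi>], rule local_ball, rule HA_local) (use that in auto)
  have Y_loc: "local {\<pi> s} (\<lambda>r. min n (r (\<pi> s)) = a)" for a
    unfolding local_def by auto
  have Y_meas: "{\<omega>\<in>space M. min n (X (\<pi> s) \<omega>) = a} \<in> events" for a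
    using ev_meas[OF _ _ Y_loc[of a]] \<pi>(1) sn by auto
  have DEC: "prob (ev K' s) = (\<Sum>a\<in>{..n}. y a * prob (ev (Ka K' a) (Suc s)))" if K': "K' \<subseteq> {..<n}" for K'
  proof -
    have "prob (ev K' s) = (\<Sum>a\<in>{..n}. prob (ev K' s \<inter> {\<omega>\<in>space M. min n (X (\<pi> s) \<omega>) = a}))"
      by (rule PART[OF _ ev_meas'[OF K'] Y_meas]) auto
    also have "\<dots> = (\<Sum>a\<in>{..n}. y a * prob (ev (Ka K' a) (Suc s)))"
    proof (rule sum.cong[OF refl])
      fix a assume a: "a \<in> {..n}"
      have "ev K' s \<inter> {\<omega>\<in>space M. min n (X (\<pi> s) \<omega>) = a} =
        {\<omega>\<in>space M. (\<lambda>r. min n (r (\<pi> s)) = a) (\<lambda>i. X i \<omega>) \<and> (\<lambda>r. \<forall>k\<in>Ka K' a. HA \<pi> (Suc s) k r) (\<lambda>i. X i \<omega>)}"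
      proof -
        have pt: "HA \<pi> s k r \<longleftrightarrow> (s \<le> k \<and> k + 1 - s \<le> min n (r (\<pi> s))) \<or> HA \<pi> (Suc s) k r"
          if "k \<in> K'" for k r
          by (rule HA_step[OF sn]) (use that K' in auto)
        have pt2: "(\<forall>k\<in>K'. HA \<pi> s k r) \<longleftrightarrow> (\<forall>k\<in>Ka K' a. HA \<pi> (Suc s) k r)"
          if ra: "min n (r (\<pi> s)) = a" for r
        proof
          assume H: "\<forall>k\<in>K'. HA \<pi> s k r"
          show "\<forall>k\<in>Ka K' a. HA \<pi> (Suc s) k r"
          proof
            fix k assume k: "k \<in> Ka K' a"
            then have k1: "k \<in> K'" "\<not> (s \<le> k \<and> k + 1 - s \<le> a)" unfolding Ka_def by auto
            then show "HA \<pi> (Suc s) k r" using H pt[OF k1(1), of r] ra by auto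
          qed
        next
          assume H: "\<forall>k\<in>Ka K' a. HA \<pi> (Suc s) k r"
          show "\<forall>k\<in>K'. HA \<pi> s k r"
          proof
            fix k assume k: "k \<in> K'"
            show "HA \<pi> s k r"
            proof (cases "s \<le> k \<and> k + 1 - s \<le> a")
              case True
              then show ?thesis using pt[OF k, of r] ra by auto
            next
              case False
              then have "k \<in> Ka K' a" using k unfolding Ka_def by auto
              then show ?thesis using H pt[OF k, of r] by auto
            qed
          qed
        qed
        show ?thesis
        proof (rule set_eqI)
          fix \<omega>
          show "\<omega> \<in> ev K' s \<inter> {\<omega> \<in> space M. min n (X (\<pi> s) \<omega>) = a} \<longleftrightarrow>
             \<omega> \<in> {\<omega>\<in>space M. (\<lambda>r. min n (r (\<pi> s)) = a) (\<lambda>i. X i \<omega>) \<and> (\<lambda>r. \<forall>k\<in>Ka K' a. HA \<pi> (Suc s) k r) (\<lambda>i. X i \<omega>)}"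
            using pt2[of "\<lambda>i. X i \<omega>"] unfolding ev_def by auto
        qed
      qed
      also have "prob \<dots> = y a * prob (ev (Ka K' a) (Suc s))"
        unfolding y_def ev_def
      proof (rule IND2)
        show "finite {\<pi> s}" "finite (\<pi> ` {Suc s..<n})" by auto
        show "{\<pi> s} \<subseteq> I" "\<pi> ` {Suc s..<n} \<subseteq> I" using \<pi>(1) sn by auto
        show "{\<pi> s} \<inter> \<pi> ` {Suc s..<n} = {}"
        proof (rule ccontr)
          assume "{\<pi> s} \<inter> \<pi> ` {Suc s..<n} \<noteq> {}"
          then obtain x where x: "Suc s \<le> x" "x < n" "\<pi> s = \<pi> x" by auto
          then have "s = x" using inj_onD[OF \<pi>(2) x(3)] sn by simp
          then show False using x by simp
        qed
        show "local {\<pi> s} (\<lambda>r. min n (r (\<pi> s)) = a)" by (rule Y_loc)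
        show "local (\<pi> ` {Suc s..<n}) (\<lambda>r. \<forall>k\<in>Ka K' a. HA \<pi> (Suc s) k r)"
          using K' by (intro local_ball HA_local) (auto simp: Ka_def)
      qed
      finally show "prob (ev K' s \<inter> {\<omega>\<in>space M. min n (X (\<pi> s) \<omega>) = a}) = y a * prob (ev (Ka K' a) (Suc s))" .
    qed
    finally show ?thesis .
  qed
  have y_nn: "0 \<le> y a" for a unfolding y_def by simp
  have y_sum: "sum y {..n} = 1"
  proof -
    have "prob (space M) = (\<Sum>a\<in>{..n}. prob (space M \<inter> {\<omega>\<in>space M. min n (X (\<pi> s) \<omega>) = a}))"
      by (rule PART[OF _ _ Y_meas]) auto
    moreover have "space M \<inter> {\<omega>\<in>space M. min n (X (\<pi> s) \<omega>) = a} = {\<omega>\<in>space M. min n (X (\<pi> s) \<omega>) = a}" for a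
      by auto
    ultimately show ?thesis by (simp add: y_def prob_space)
  qed
  define h where "h k a = (if s \<le> k \<and> k + 1 - s \<le> a then 1 else prob (ev {k} (Suc s)))" for k a
  have h_mono: "mono (h k)" for k
    unfolding h_def by (intro monoI) auto
  have h_nn: "0 \<le> h k a" for k a unfolding h_def by simp
  have fK: "finite K" using Suc.prems finite_subset by blast
  have single: "prob {\<omega>\<in>space M. HA \<pi> s k (\<lambda>i. X i \<omega>)} = (\<Sum>a\<in>{..n}. y a * h k a)" if k: "k \<in> K" for k
  proof -
    have "prob {\<omega>\<in>space M. HA \<pi> s k (\<lambda>i. X i \<omega>)} = prob (ev {k} s)" unfolding ev_def by simp
    also have "\<dots> = (\<Sum>a\<in>{..n}. y a * prob (ev (Ka {k} a) (Suc s)))"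
      using DEC[of "{k}"] k Suc.prems by auto
    also have "\<dots> = (\<Sum>a\<in>{..n}. y a * h k a)"
    proof (rule sum.cong[OF refl])
      fix a
      show "y a * prob (ev (Ka {k} a) (Suc s)) = y a * h k a"
        by (cases "s \<le> k \<and> k + 1 - s \<le> a") (auto simp: Ka_def h_def ev_def prob_space)
    qed
    finally show ?thesis .
  qed
  have "(\<Prod>k\<in>K. prob {\<omega>\<in>space M. HA \<pi> s k (\<lambda>i. X i \<omega>)}) = (\<Prod>k\<in>K. \<Sum>a\<in>{..n}. y a * h k a)"
    using single by (rule prod.cong[OF refl])
  also have "\<dots> \<le> (\<Sum>a\<in>{..n}. y a * (\<Prod>k\<in>K. h k a))"
    by (rule chebK[OF _ _ y_sum h_mono h_nn fK]) (auto simp: y_nn)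
  also have "\<dots> \<le> (\<Sum>a\<in>{..n}. y a * prob (ev (Ka K a) (Suc s)))"
  proof (rule sum_mono, rule mult_left_mono[OF _ y_nn])
    fix a
    have "(\<Prod>k\<in>K. h k a) = (\<Prod>k\<in>Ka K a. prob (ev {k} (Suc s)))"
    proof -
      have "(\<Prod>k\<in>K. h k a) = (\<Prod>k\<in>K \<inter> {k. s \<le> k \<and> k + 1 - s \<le> a}. 1) *
          (\<Prod>k\<in>K \<inter> - {k. s \<le> k \<and> k + 1 - s \<le> a}. prob (ev {k} (Suc s)))"
        unfolding h_def by (rule prod.If_cases[OF fK])
      moreover have "K \<inter> - {k. s \<le> k \<and> k + 1 - s \<le> a} = Ka K a" by (auto simp: Ka_def)
      ultimately show ?thesis by simp
    qed
    also have "\<dots> = (\<Prod>k\<in>Ka K a. prob {\<omega>\<in>space M. HA \<pi> (Suc s) k (\<lambda>i. X i \<omega>)})"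
      unfolding ev_def by simp
    also have "\<dots> \<le> prob (ev (Ka K a) (Suc s))"
      unfolding ev_def using Suc.hyps Suc.prems by (intro Suc.hyps(1)) (auto simp: Ka_def)
    finally show "(\<Prod>k\<in>K. h k a) \<le> prob (ev (Ka K a) (Suc s))" .
  qed
  also have "\<dots> = prob (ev K s)" using DEC[OF Suc.prems(2)] by simp
  finally show ?case unfolding ev_def .
qed

end


lemma pow_bound:
  fixes \<delta> :: real
  assumes "0 \<le> \<delta>" "\<delta> \<le> 1"
  shows "(1 - \<delta>) ^ x \<le> 1 - \<delta> * x + real x ^ 2 * \<delta>^2 / 2"
proof (induction x)
  case 0
  then show ?case by simp
next
  case (Suc x)
  have "(1 - \<delta>) ^ Suc x = (1 - \<delta>) * (1 - \<delta>) ^ x" by simp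
  also have "\<dots> \<le> (1 - \<delta>) * (1 - \<delta> * x + real x ^ 2 * \<delta>^2 / 2)"
    using Suc assms by (intro mult_left_mono) auto
  also have "\<dots> = 1 - \<delta> * Suc x + real (Suc x) ^ 2 * \<delta>^2 / 2 - (\<delta>^2 / 2 + real x ^ 2 * \<delta>^3 / 2)"
    by (simp add: field_simps power2_eq_square power3_eq_cube)
  also have "\<dots> \<le> 1 - \<delta> * Suc x + real (Suc x) ^ 2 * \<delta>^2 / 2"
  proof -
    have "0 \<le> \<delta>^2 / 2 + real x ^ 2 * \<delta>^3 / 2"
      using assms by (intro add_nonneg_nonneg divide_nonneg_nonneg mult_nonneg_nonneg) auto
    then show ?thesis by linarith
  qed
  finally show ?case .
qed

locale cone_setup = indep_nat M Rbar "tree_vertices d" for M :: "'a measure" and Rbar and d :: nat +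
  fixes n :: nat and p :: "nat \<Rightarrow> nat pmf"
  assumes d2: "d \<ge> 2" and npos: "n > 0"
    and distr: "\<And>u. u \<in> tree_vertices d \<Longrightarrow> distr M (count_space UNIV) (Rbar u) = measure_pmf (p (length u))"
begin

definition Q :: "nat \<Rightarrow> real" where
  "Q j = (\<Prod>k<n. 1 - (\<Prod>i\<le>k. measure_pmf.prob (p (j * n + i)) {r. r < k + 1 - i}))"

lemma prob_single:
  assumes "u \<in> tree_vertices d"
  shows "prob {\<omega>\<in>space M. P (Rbar u \<omega>)} = measure_pmf.prob (p (length u)) {r. P r}"
proof -
  have m: "Rbar u \<in> measurable M (count_space UNIV)" using X_meas assms by simp
  have "measure_pmf.prob (p (length u)) {r. P r} = measure (distr M (count_space UNIV) (Rbar u)) {r. P r}"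
    using distr[OF assms] by simp
  also have "\<dots> = measure M (Rbar u -` {r. P r} \<inter> space M)"
    by (rule measure_distr[OF m]) simp
  also have "Rbar u -` {r. P r} \<inter> space M = {\<omega>\<in>space M. P (Rbar u \<omega>)}" by auto
  finally show ?thesis by simp
qed

lemma Eb_prob:
  assumes u: "u \<in> tree_vertices d" and w: "w \<in> W d n" and len: "length u = j * n"
  shows "Q j \<le> prob {\<omega>\<in>space M. Eb n (\<lambda>v. Rbar v \<omega>) u w}"
proof -
  define \<pi> where "\<pi> i = u @ take i w" for i
  have wlen: "length w = n" and wt: "w \<in> tree_vertices d" using w by (auto simp: W_def)
  have \<pi>I: "\<pi> ` {..<n} \<subseteq> tree_vertices d"
    using u wt by (auto simp: \<pi>_def intro!: tree_append tree_take)
  have lenpi: "length (\<pi> i) = j * n + i" if "i < n" for i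
    using that wlen len by (simp add: \<pi>_def)
  have \<pi>inj: "inj_on \<pi> {..<n}"
    by (rule inj_onI) (metis lenpi lessThan_iff add_left_cancel)
  have H: "(\<Prod>k\<in>{..<n}. prob {\<omega>\<in>space M. HA \<pi> 0 k (\<lambda>i. Rbar i \<omega>)}) \<le>
      prob {\<omega>\<in>space M. \<forall>k\<in>{..<n}. HA \<pi> 0 k (\<lambda>i. Rbar i \<omega>)}"
    by (rule harris[OF \<pi>I \<pi>inj]) auto
  have E: "{\<omega>\<in>space M. \<forall>k\<in>{..<n}. HA \<pi> 0 k (\<lambda>i. Rbar i \<omega>)} = {\<omega>\<in>space M. Eb n (\<lambda>v. Rbar v \<omega>) u w}"
    unfolding HA_def Eb_def \<pi>_def by auto
  have F: "prob {\<omega>\<in>space M. HA \<pi> 0 k (\<lambda>i. Rbar i \<omega>)} =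
      1 - (\<Prod>i\<le>k. measure_pmf.prob (p (j * n + i)) {r. r < k + 1 - i})" if k: "k < n" for k
  proof -
    have loc: "local (\<pi> ` {0..<n}) (HA \<pi> 0 k)" by (rule HA_local[OF k])
    have meas: "{\<omega>\<in>space M. HA \<pi> 0 k (\<lambda>i. Rbar i \<omega>)} \<in> events"
      using \<pi>I by (intro ev_meas[OF _ _ loc]) (auto simp: lessThan_atLeast0)
    have c1: "space M - {\<omega>\<in>space M. HA \<pi> 0 k (\<lambda>i. Rbar i \<omega>)} =
        {\<omega>\<in>space M. \<forall>i\<in>{..k}. (\<lambda>r. r (\<pi> i) < k + 1 - i) (\<lambda>v. Rbar v \<omega>)}"
      unfolding HA_def by (auto simp: not_le) (meson atMost_iff leD)
    have c2: "prob {\<omega>\<in>space M. \<forall>i\<in>{..k}. (\<lambda>r. r (\<pi> i) < k + 1 - i) (\<lambda>v. Rbar v \<omega>)} =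
        (\<Prod>i\<in>{..k}. prob {\<omega>\<in>space M. (\<lambda>r. r (\<pi> i) < k + 1 - i) (\<lambda>v. Rbar v \<omega>)})"
    proof (rule IND[where K="\<lambda>i. {\<pi> i}"])
      show "finite {..k}" "{..k} \<noteq> {}" by auto
      show "\<And>l. l \<in> {..k} \<Longrightarrow> {\<pi> l} \<subseteq> tree_vertices d" using \<pi>I k by auto
      show "\<And>l. l \<in> {..k} \<Longrightarrow> finite {\<pi> l}" by simp
      show "disjoint_family_on (\<lambda>i. {\<pi> i}) {..k}"
        unfolding disjoint_family_on_def using inj_onD[OF \<pi>inj] k by fastforce
      show "\<And>l. l \<in> {..k} \<Longrightarrow> local {\<pi> l} (\<lambda>r. r (\<pi> l) < k + 1 - l)"
        unfolding local_def by auto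
    qed
    have c3: "prob {\<omega>\<in>space M. (\<lambda>r. r (\<pi> i) < k + 1 - i) (\<lambda>v. Rbar v \<omega>)} =
        measure_pmf.prob (p (j * n + i)) {r. r < k + 1 - i}" if i: "i \<in> {..k}" for i
    proof -
      have "\<pi> i \<in> tree_vertices d" using \<pi>I i k by auto
      then have "prob {\<omega>\<in>space M. Rbar (\<pi> i) \<omega> < k + 1 - i} = measure_pmf.prob (p (length (\<pi> i))) {r. r < k + 1 - i}"
        by (rule prob_single)
      then show ?thesis using lenpi[of i] i k by simp
    qed
    have "prob (space M - {\<omega>\<in>space M. HA \<pi> 0 k (\<lambda>i. Rbar i \<omega>)}) =
        (\<Prod>i\<in>{..k}. prob {\<omega>\<in>space M. (\<lambda>r. r (\<pi> i) < k + 1 - i) (\<lambda>v. Rbar v \<omega>)})"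
      using c1 c2 by simp
    also have "\<dots> = (\<Prod>i\<le>k. measure_pmf.prob (p (j * n + i)) {r. r < k + 1 - i})"
      by (rule prod.cong[OF refl c3])
    finally have "prob (space M - {\<omega>\<in>space M. HA \<pi> 0 k (\<lambda>i. Rbar i \<omega>)}) =
        (\<Prod>i\<le>k. measure_pmf.prob (p (j * n + i)) {r. r < k + 1 - i})" .
    then show ?thesis using prob_compl[OF meas] by simp
  qed
  have "Q j = (\<Prod>k\<in>{..<n}. prob {\<omega>\<in>space M. HA \<pi> 0 k (\<lambda>i. Rbar i \<omega>)})"
    unfolding Q_def using F by (intro prod.cong) auto
  then show ?thesis using H E by simp
qed


lemma G_loc: "local (Tset d n m v) (\<lambda>r. G d n m r v)"
  by (rule localI, rule G_local) auto

lemma nG_loc: "local (Tset d n m v) (\<lambda>r. \<not> G d n m r v)"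
  using G_loc unfolding local_def by blast

lemma Eb_loc: "w \<in> W d n \<Longrightarrow> local (Tset d n 1 u) (\<lambda>r. Eb n r u w)"
  by (rule localI, rule Eb_local) auto

lemma Op_loc: "local (Tset d n 1 u) (\<lambda>r. {w \<in> W d n. Eb n r u w} = S)"
proof (rule localI)
  fix r r' :: "nat list \<Rightarrow> nat" assume "\<And>v. v \<in> Tset d n 1 u \<Longrightarrow> r v = r' v"
  then have "\<And>w. w \<in> W d n \<Longrightarrow> Eb n r u w = Eb n r' u w" using Eb_local by blast
  then have "{w \<in> W d n. Eb n r u w} = {w \<in> W d n. Eb n r' u w}" by blast
  then show "({w \<in> W d n. Eb n r u w} = S) = ({w \<in> W d n. Eb n r' u w} = S)" by simp
qed

lemma surv:
  fixes c \<delta> :: real and J :: nat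
  assumes cJ: "\<And>j. J \<le> j \<Longrightarrow> c \<le> real (d ^ n) * Q j" and c1: "1 < c"
    and \<delta>def: "\<delta> = 2 * (c - 1) / (real (d ^ n))^2" and \<delta>1: "\<delta> \<le> 1"
  shows "J \<le> j \<Longrightarrow> u \<in> tree_vertices d \<Longrightarrow> length u = j * n \<Longrightarrow>
    \<delta> \<le> prob {\<omega>\<in>space M. G d n m (\<lambda>v. Rbar v \<omega>) u}"
proof (induction m arbitrary: j u)
  case 0
  then show ?case using \<delta>1 by (simp add: prob_space)
next
  case (Suc m)
  note u = Suc.prems(2)
  define D where "D = real (d ^ n)"
  have Dpos: "D > 0" using d2 by (simp add: D_def)
  have \<delta>0: "0 \<le> \<delta>" using c1 by (simp add: \<delta>def)
  have \<delta>D: "D^2 * \<delta>^2 / 2 = \<delta> * (c - 1)"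
    using Dpos by (simp add: \<delta>def D_def power2_eq_square field_simps)
  have cardW: "real (card (W d n)) = D" by (simp add: card_W D_def)
  have uw_tree: "u @ w \<in> tree_vertices d" if "w \<in> W d n" for w
    using that u by (auto simp: W_def intro: tree_append)
  have sw: "\<delta> \<le> prob {\<omega>\<in>space M. G d n m (\<lambda>v. Rbar v \<omega>) (u @ w)}" if w: "w \<in> W d n" for w
  proof (rule Suc.IH[of "Suc j"])
    show "J \<le> Suc j" using Suc.prems by simp
    show "u @ w \<in> tree_vertices d" by (rule uw_tree[OF w])
    show "length (u @ w) = Suc j * n" using w Suc.prems by (simp add: W_def)
  qed
  define Op where "Op r = {w \<in> W d n. Eb n r u w}" for r
  define ng where "ng = {\<omega>\<in>space M. \<not> G d n (Suc m) (\<lambda>v. Rbar v \<omega>) u}"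
  define ev where "ev S = {\<omega>\<in>space M. Op (\<lambda>v. Rbar v \<omega>) = S}" for S
  have ev_m: "ev S \<in> events" for S
    unfolding ev_def Op_def by (rule ev_meas[OF finite_Tset Tset_sub[OF u] Op_loc])
  have ng_m: "ng \<in> events"
    unfolding ng_def by (rule ev_meas[OF finite_Tset Tset_sub[OF u] nG_loc])
  have Eb_m: "{\<omega>\<in>space M. Eb n (\<lambda>v. Rbar v \<omega>) u w} \<in> events" if "w \<in> W d n" for w
    by (rule ev_meas[OF finite_Tset Tset_sub[OF u] Eb_loc[OF that]])
  have G_m: "{\<omega>\<in>space M. G d n m (\<lambda>v. Rbar v \<omega>) (u @ w)} \<in> events" if "w \<in> W d n" for w
    by (rule ev_meas[OF finite_Tset Tset_sub[OF uw_tree[OF that]] G_loc])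
  have Op_in: "Op r \<in> Pow (W d n)" for r unfolding Op_def by auto
  have finPW: "finite (Pow (W d n))" using finite_W by simp
  have PART': "prob A = (\<Sum>S\<in>Pow (W d n). prob (A \<inter> ev S))" if "A \<in> events" for A
    unfolding ev_def by (rule PART[OF finPW that]) (use ev_m Op_in in \<open>auto simp: ev_def\<close>)
  have P2: "prob (ng \<inter> ev S) = prob (ev S) * (\<Prod>w\<in>S. prob {\<omega>\<in>space M. \<not> G d n m (\<lambda>v. Rbar v \<omega>) (u @ w)})"
    if S: "S \<subseteq> W d n" for S
  proof -
    define \<Phi> where "\<Phi> = case_option (\<lambda>r. Op r = S) (\<lambda>w r. \<not> G d n m r (u @ w))"
    define K where "K = case_option (Tset d n 1 u) (\<lambda>w. Tset d n m (u @ w))"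
    define L where "L = insert None (Some ` S)"
    have key: "(\<not> G d n (Suc m) r u) \<longleftrightarrow> (\<forall>w\<in>S. \<not> G d n m r (u @ w))" if "Op r = S" for r
    proof -
      have "w \<in> S \<longleftrightarrow> w \<in> W d n \<and> Eb n r u w" for w using that unfolding Op_def by blast
      then show ?thesis by auto
    qed
    have "ng \<inter> ev S = {\<omega>\<in>space M. \<forall>l\<in>L. \<Phi> l (\<lambda>v. Rbar v \<omega>)}"
    proof (rule set_eqI)
      fix \<omega>
      show "\<omega> \<in> ng \<inter> ev S \<longleftrightarrow> \<omega> \<in> {\<omega>\<in>space M. \<forall>l\<in>L. \<Phi> l (\<lambda>v. Rbar v \<omega>)}"
        using key[of "\<lambda>v. Rbar v \<omega>"] unfolding ng_def ev_def L_def \<Phi>_def by auto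
    qed
    also have "prob \<dots> = (\<Prod>l\<in>L. prob {\<omega>\<in>space M. \<Phi> l (\<lambda>v. Rbar v \<omega>)})"
    proof (rule IND[where K=K])
      have fS: "finite S" using S finite_W finite_subset by blast
      show "finite L" "L \<noteq> {}" using fS unfolding L_def by auto
      show "K l \<subseteq> tree_vertices d" if "l \<in> L" for l
      proof (cases l)
        case None
        then show ?thesis using Tset_sub[OF u] by (simp add: K_def)
      next
        case (Some w)
        then have "w \<in> W d n" using that S by (auto simp: L_def)
        then show ?thesis using Some Tset_sub[OF uw_tree] by (simp add: K_def)
      qed
      show "finite (K l)" for l unfolding K_def by (cases l) (auto simp: finite_Tset)
      show "disjoint_family_on K L"
        unfolding disjoint_family_on_def
      proof (intro ballI impI)
        fix a b assume a: "a \<in> L" and b: "b \<in> L" and ab: "a \<noteq> b"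
        show "K a \<inter> K b = {}"
        proof (cases a)
          case None
          then obtain w where bw: "b = Some w" "w \<in> W d n" using b ab S unfolding L_def by auto
          show ?thesis using Tset_disj1[OF bw(2), of u m] None bw(1) by (simp add: K_def)
        next
          case (Some w)
          then have w: "w \<in> W d n" using a S unfolding L_def by auto
          show ?thesis
          proof (cases b)
            case None
            then show ?thesis using Tset_disj1[OF w, of u m] Some by (auto simp: K_def)
          next
            case (Some w')
            then have w': "w' \<in> W d n" "w \<noteq> w'" using b S ab \<open>a = Some w\<close> unfolding L_def by auto
            show ?thesis using Tset_disj[OF w w'(1) w'(2), of m u m] Some \<open>a = Some w\<close> by (simp add: K_def)
          qed
        qed
      qed
      show "local (K l) (\<Phi> l)" for l
        unfolding K_def \<Phi>_def Op_def by (cases l) (auto intro: Op_loc[simplified] nG_loc)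
    qed
    also have "\<dots> = prob (ev S) * (\<Prod>w\<in>S. prob {\<omega>\<in>space M. \<not> G d n m (\<lambda>v. Rbar v \<omega>) (u @ w)})"
      unfolding L_def using finite_subset[OF S finite_W]
      by (subst prod.insert) (auto simp: prod.reindex \<Phi>_def ev_def)
    finally show ?thesis .
  qed
  have P4: "(\<Prod>w\<in>S. prob {\<omega>\<in>space M. \<not> G d n m (\<lambda>v. Rbar v \<omega>) (u @ w)}) \<le> 1 + D^2 * \<delta>^2 / 2 - \<delta> * card S"
    if S: "S \<subseteq> W d n" for S
  proof -
    have "(\<Prod>w\<in>S. prob {\<omega>\<in>space M. \<not> G d n m (\<lambda>v. Rbar v \<omega>) (u @ w)}) \<le> (\<Prod>w\<in>S. 1 - \<delta>)"
    proof (rule prod_mono, rule conjI)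
      fix w assume w: "w \<in> S"
      then have w': "w \<in> W d n" using S by auto
      have e: "{\<omega>\<in>space M. \<not> G d n m (\<lambda>v. Rbar v \<omega>) (u @ w)} = space M - {\<omega>\<in>space M. G d n m (\<lambda>v. Rbar v \<omega>) (u @ w)}"
        by auto
      show "0 \<le> prob {\<omega>\<in>space M. \<not> G d n m (\<lambda>v. Rbar v \<omega>) (u @ w)}" by simp
      show "prob {\<omega>\<in>space M. \<not> G d n m (\<lambda>v. Rbar v \<omega>) (u @ w)} \<le> 1 - \<delta>"
        using e prob_compl[OF G_m[OF w']] sw[OF w'] by simp
    qed
    also have "\<dots> = (1 - \<delta>) ^ card S" by simp
    also have "\<dots> \<le> 1 - \<delta> * card S + real (card S) ^ 2 * \<delta>^2 / 2"
      by (rule pow_bound[OF \<delta>0 \<delta>1])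
    also have "\<dots> \<le> 1 - \<delta> * card S + D ^ 2 * \<delta>^2 / 2"
    proof -
      have "card S \<le> card (W d n)" using S finite_W by (rule card_mono[rotated])
      then have "real (card S) \<le> D" using cardW by linarith
      then have "real (card S) ^ 2 \<le> D ^ 2" by (intro power_mono) auto
      then show ?thesis by (intro add_left_mono divide_right_mono mult_right_mono) auto
    qed
    finally show ?thesis by simp
  qed
  have P6: "(\<Sum>S\<in>Pow (W d n). prob (ev S)) = 1"
    using PART'[OF sets.top] ev_m by (simp add: prob_space Int_absorb1 sets.sets_into_space)
  have P7: "(\<Sum>w\<in>W d n. prob {\<omega>\<in>space M. Eb n (\<lambda>v. Rbar v \<omega>) u w}) = (\<Sum>S\<in>Pow (W d n). prob (ev S) * card S)"
  proof -
    have "(\<Sum>w\<in>W d n. prob {\<omega>\<in>space M. Eb n (\<lambda>v. Rbar v \<omega>) u w}) =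
        (\<Sum>w\<in>W d n. \<Sum>S\<in>Pow (W d n). if w \<in> S then prob (ev S) else 0)"
    proof (rule sum.cong[OF refl])
      fix w assume w: "w \<in> W d n"
      have "prob {\<omega>\<in>space M. Eb n (\<lambda>v. Rbar v \<omega>) u w} = (\<Sum>S\<in>Pow (W d n). prob ({\<omega>\<in>space M. Eb n (\<lambda>v. Rbar v \<omega>) u w} \<inter> ev S))"
        by (rule PART'[OF Eb_m[OF w]])
      also have "\<dots> = (\<Sum>S\<in>Pow (W d n). if w \<in> S then prob (ev S) else 0)"
      proof (rule sum.cong[OF refl])
        fix S
        have "{\<omega>\<in>space M. Eb n (\<lambda>v. Rbar v \<omega>) u w} \<inter> ev S = (if w \<in> S then ev S else {})"
          using w unfolding ev_def Op_def by auto
        then show "prob ({\<omega>\<in>space M. Eb n (\<lambda>v. Rbar v \<omega>) u w} \<inter> ev S) = (if w \<in> S then prob (ev S) else 0)"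
          by simp
      qed
      finally show "prob {\<omega>\<in>space M. Eb n (\<lambda>v. Rbar v \<omega>) u w} = (\<Sum>S\<in>Pow (W d n). if w \<in> S then prob (ev S) else 0)" .
    qed
    also have "\<dots> = (\<Sum>S\<in>Pow (W d n). \<Sum>w\<in>W d n. if w \<in> S then prob (ev S) else 0)"
      by (rule sum.swap)
    also have "\<dots> = (\<Sum>S\<in>Pow (W d n). prob (ev S) * card S)"
    proof (rule sum.cong[OF refl])
      fix S assume "S \<in> Pow (W d n)"
      then have "{w \<in> W d n. w \<in> S} = S" by auto
      then have "(\<Sum>w\<in>W d n. if w \<in> S then prob (ev S) else 0) = (\<Sum>w\<in>S. prob (ev S))"
        using sum.inter_filter[OF finite_W[of d n], where g="\<lambda>_. prob (ev S)" and P="\<lambda>w. w \<in> S"] by simp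
      then show "(\<Sum>w\<in>W d n. if w \<in> S then prob (ev S) else 0) = prob (ev S) * card S" by simp
    qed
    finally show ?thesis .
  qed
  have P8: "c \<le> (\<Sum>w\<in>W d n. prob {\<omega>\<in>space M. Eb n (\<lambda>v. Rbar v \<omega>) u w})"
  proof -
    have "c \<le> D * Q j" using cJ[OF Suc.prems(1)] by (simp add: D_def)
    also have "\<dots> = (\<Sum>w\<in>W d n. Q j)" using cardW by simp
    also have "\<dots> \<le> (\<Sum>w\<in>W d n. prob {\<omega>\<in>space M. Eb n (\<lambda>v. Rbar v \<omega>) u w})"
      by (rule sum_mono, rule Eb_prob[OF u _ Suc.prems(3)])
    finally show ?thesis .
  qed
  have "prob ng = (\<Sum>S\<in>Pow (W d n). prob (ng \<inter> ev S))" by (rule PART'[OF ng_m])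
  also have "\<dots> \<le> (\<Sum>S\<in>Pow (W d n). prob (ev S) * (1 + D^2 * \<delta>^2 / 2 - \<delta> * card S))"
  proof (rule sum_mono)
    fix S assume "S \<in> Pow (W d n)"
    then have S: "S \<subseteq> W d n" by simp
    show "prob (ng \<inter> ev S) \<le> prob (ev S) * (1 + D^2 * \<delta>^2 / 2 - \<delta> * card S)"
      unfolding P2[OF S] by (rule mult_left_mono[OF P4[OF S]]) simp
  qed
  also have "\<dots> = (1 + D^2 * \<delta>^2 / 2) * (\<Sum>S\<in>Pow (W d n). prob (ev S)) - \<delta> * (\<Sum>S\<in>Pow (W d n). prob (ev S) * card S)"
    by (simp add: algebra_simps sum_subtractf sum_distrib_left sum_distrib_right sum.distrib sum_divide_distrib)
  also have "\<dots> = 1 + \<delta> * (c - 1) - \<delta> * (\<Sum>w\<in>W d n. prob {\<omega>\<in>space M. Eb n (\<lambda>v. Rbar v \<omega>) u w})"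
    using P6 P7 \<delta>D by simp
  also have "\<dots> \<le> 1 + \<delta> * (c - 1) - \<delta> * c"
    using P8 \<delta>0 by (intro diff_left_mono mult_left_mono) auto
  finally have "prob ng \<le> 1 - \<delta>" by (simp add: algebra_simps)
  moreover have "ng = space M - {\<omega>\<in>space M. G d n (Suc m) (\<lambda>v. Rbar v \<omega>) u}" unfolding ng_def by auto
  moreover have "{\<omega>\<in>space M. G d n (Suc m) (\<lambda>v. Rbar v \<omega>) u} \<in> events"
    by (rule ev_meas[OF finite_Tset Tset_sub[OF u] G_loc])
  ultimately show ?case using prob_compl by simp
qed


lemma target_eq:
  "{\<omega>\<in>space M. infinite (cone_reached d (\<lambda>u. Rbar u \<omega>))} =
   (\<Inter>m. {\<omega>\<in>space M. \<exists>v\<in>{v \<in> tree_vertices d. length v = m}. reach (\<lambda>u. Rbar u \<omega>) v})"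
  using infinite_iff by auto

lemma reach_local: "local {v \<in> tree_vertices d. length v \<le> m} (\<lambda>r. \<exists>v\<in>{v \<in> tree_vertices d. length v = m}. reach r v)"
proof (rule localI)
  fix r r' :: "nat list \<Rightarrow> nat" assume eq: "\<And>v. v \<in> {v \<in> tree_vertices d. length v \<le> m} \<Longrightarrow> r v = r' v"
  have "reach r v = reach r' v" if v: "v \<in> tree_vertices d" "length v = m" for v
  proof -
    have "r (take i v) = r' (take i v)" if "i < length v" for i
      using eq[of "take i v"] v that tree_take by auto
    then show ?thesis unfolding reach_def by (metis le_less_trans)
  qed
  then show "(\<exists>v\<in>{v \<in> tree_vertices d. length v = m}. reach r v) = (\<exists>v\<in>{v \<in> tree_vertices d. length v = m}. reach r' v)"
    by blast
qed

lemma target_meas: "{\<omega>\<in>space M. infinite (cone_reached d (\<lambda>u. Rbar u \<omega>))} \<in> events"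
  unfolding target_eq
proof (rule sets.countable_INT)
  show "range (\<lambda>m. {\<omega>\<in>space M. \<exists>v\<in>{v \<in> tree_vertices d. length v = m}. reach (\<lambda>u. Rbar u \<omega>) v}) \<subseteq> events"
  proof safe
    fix m
    show "{\<omega>\<in>space M. \<exists>v\<in>{v \<in> tree_vertices d. length v = m}. reach (\<lambda>u. Rbar u \<omega>) v} \<in> events"
      by (rule ev_meas[OF finite_tree_le _ reach_local]) auto
  qed
qed simp

lemma positive:
  assumes pos: "\<And>z. pmf (p z) 0 < 1" and lim: "liminf (\<lambda>j. ereal (real d ^ n * Q j)) > 1"
  shows "measure M {\<omega> \<in> space M. infinite (cone_reached d (\<lambda>u. Rbar u \<omega>))} > 0"
proof -
  obtain c0 where c0: "1 < ereal c0" "ereal c0 < liminf (\<lambda>j. ereal (real d ^ n * Q j))"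
    using ereal_dense2[OF lim] by blast
  have "\<forall>\<^sub>F j in sequentially. ereal c0 < ereal (real d ^ n * Q j)"
    by (rule less_LiminfD[OF c0(2)])
  then obtain J0 where J0: "\<And>j. J0 \<le> j \<Longrightarrow> c0 < real d ^ n * Q j"
    unfolding eventually_sequentially by auto
  define J where "J = max J0 1"
  define c where "c = min c0 2"
  have c1: "1 < c" using c0(1) by (simp add: c_def)
  have cJ: "c \<le> real (d ^ n) * Q j" if "J \<le> j" for j
    using J0[of j] that by (simp add: J_def c_def)
  define D where "D = real (d ^ n)"
  have D2: "2 \<le> D"
  proof -
    have "d ^ 1 \<le> d ^ n" using d2 npos by (intro power_increasing) auto
    then have "2 \<le> d ^ n" using d2 by simp
    then have "real 2 \<le> real (d ^ n)" by (simp only: of_nat_le_iff)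
    then show ?thesis by (simp add: D_def)
  qed
  define \<delta> where "\<delta> = 2 * (c - 1) / D^2"
  have \<delta>pos: "0 < \<delta>" using c1 D2 by (simp add: \<delta>_def)
  have \<delta>1: "\<delta> \<le> 1"
  proof -
    have "2 * 2 \<le> D * D" using D2 by (intro mult_mono) auto
    then have "4 \<le> D^2" by (simp add: power2_eq_square)
    moreover have "2 * (c - 1) \<le> 2" using c_def by simp
    ultimately show ?thesis unfolding \<delta>_def by (simp add: divide_le_eq)
  qed
  have J1: "1 \<le> J" by (simp add: J_def)
  define z where "z = replicate (J * n) (0::nat)"
  have zt: "z \<in> tree_vertices d" using d2 by (simp add: z_def tree_vertices_def)
  have zl: "length z = J * n" by (simp add: z_def)
  define KF where "KF = (\<lambda>i. replicate i (0::nat)) ` {..<J * n}"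
  define F where "F r = (\<forall>i<J * n. 1 \<le> r (replicate i (0::nat)))" for r :: "nat list \<Rightarrow> nat"
  have KFt: "KF \<subseteq> tree_vertices d" using d2 by (auto simp: KF_def tree_vertices_def)
  have KFf: "finite KF" by (simp add: KF_def)
  have F_loc: "local KF F" unfolding local_def F_def KF_def by auto
  define H where "H m = {\<omega>\<in>space M. F (\<lambda>v. Rbar v \<omega>) \<and> G d n m (\<lambda>v. Rbar v \<omega>) z}" for m
  have disj: "KF \<inter> Tset d n m z = {}" for m
  proof (rule ccontr)
    assume "KF \<inter> Tset d n m z \<noteq> {}"
    then obtain i where i: "i < J * n" "replicate i 0 \<in> Tset d n m z" unfolding KF_def by auto
    then show False using Tset_len[OF i(2)] zl by simp
  qed
  define PF where "PF = prob {\<omega>\<in>space M. F (\<lambda>v. Rbar v \<omega>)}"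
  have PFpos: "0 < PF"
  proof -
    have "prob {\<omega>\<in>space M. \<forall>i\<in>{..<J*n}. (\<lambda>r. 1 \<le> r (replicate i (0::nat))) (\<lambda>v. Rbar v \<omega>)} =
      (\<Prod>i\<in>{..<J*n}. prob {\<omega>\<in>space M. (\<lambda>r. 1 \<le> r (replicate i (0::nat))) (\<lambda>v. Rbar v \<omega>)})"
    proof (rule IND[where K="\<lambda>i. {replicate i 0}"])
      show "finite {..<J * n}" by simp
      show "{..<J * n} \<noteq> {}" using J1 npos by (simp add: lessThan_empty_iff)
      show "\<And>l. l \<in> {..<J * n} \<Longrightarrow> {replicate l 0} \<subseteq> tree_vertices d"
        using d2 by (auto simp: tree_vertices_def)
      show "\<And>l. l \<in> {..<J * n} \<Longrightarrow> finite {replicate l 0}" by simp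
      show "disjoint_family_on (\<lambda>i. {replicate i (0::nat)}) {..<J * n}"
        unfolding disjoint_family_on_def by auto
      show "\<And>l. l \<in> {..<J * n} \<Longrightarrow> local {replicate l 0} (\<lambda>r. 1 \<le> r (replicate l (0::nat)))"
        unfolding local_def by auto
    qed
    moreover have "prob {\<omega>\<in>space M. (\<lambda>r. 1 \<le> r (replicate i (0::nat))) (\<lambda>v. Rbar v \<omega>)} > 0" for i
    proof -
      have "replicate i (0::nat) \<in> tree_vertices d" using d2 by (simp add: tree_vertices_def)
      then have "prob {\<omega>\<in>space M. 1 \<le> Rbar (replicate i 0) \<omega>} = measure_pmf.prob (p i) {r. 1 \<le> r}"
        using prob_single[of "replicate i 0" "\<lambda>r. 1 \<le> r"] by simp
      also have "{r::nat. 1 \<le> r} = space (measure_pmf (p i)) - {0}" by auto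
      also have "measure_pmf.prob (p i) \<dots> = 1 - pmf (p i) 0"
        using measure_pmf.prob_compl[where M="p i" and A="{0}"] by (simp add: measure_pmf_single)
      finally show ?thesis using pos[of i] by simp
    qed
    ultimately have "0 < prob {\<omega>\<in>space M. \<forall>i\<in>{..<J*n}. (\<lambda>r. 1 \<le> r (replicate i (0::nat))) (\<lambda>v. Rbar v \<omega>)}"
      by (simp add: prod_pos)
    then show ?thesis unfolding PF_def F_def by (simp add: Ball_def)
  qed
  have H_prob: "PF * \<delta> \<le> prob (H m)" for m
  proof -
    have "prob (H m) = PF * prob {\<omega>\<in>space M. G d n m (\<lambda>v. Rbar v \<omega>) z}"
      unfolding H_def PF_def
      by (rule IND2[OF KFf finite_Tset KFt Tset_sub[OF zt] disj F_loc G_loc])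
    moreover have "\<delta> \<le> prob {\<omega>\<in>space M. G d n m (\<lambda>v. Rbar v \<omega>) z}"
    proof -
      have \<delta>eq: "\<delta> = 2 * (c - 1) / (real (d ^ n))^2" unfolding \<delta>_def D_def ..
      show ?thesis by (rule surv[OF cJ c1 \<delta>eq \<delta>1 order.refl zt zl])
    qed
    ultimately show ?thesis using PFpos by simp
  qed
  have H_meas: "H m \<in> events" for m
  proof -
    have "local (KF \<union> Tset d n m z) (\<lambda>r. F r \<and> G d n m r z)"
      by (rule local_conj; rule local_mono) (use F_loc G_loc in auto)
    then show ?thesis unfolding H_def
      by (rule ev_meas[rotated 2]) (use KFt Tset_sub[OF zt] KFf finite_Tset in auto)
  qed
  have H_dec: "antimono_on UNIV H"
  proof (rule decseq_SucI)
    fix m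
    show "H (Suc m) \<le> H m" unfolding H_def using G_mono by blast
  qed
  have lim: "(\<lambda>m. prob (H m)) \<longlonglongrightarrow> prob (\<Inter>m. H m)"
    by (rule finite_Lim_measure_decseq) (use H_meas H_dec in auto)
  have L1: "PF * \<delta> \<le> prob (\<Inter>m. H m)"
    by (rule LIMSEQ_le_const[OF lim]) (use H_prob in auto)
  have "(\<Inter>m. H m) \<subseteq> {\<omega>\<in>space M. infinite (cone_reached d (\<lambda>u. Rbar u \<omega>))}"
  proof
    fix \<omega> assume \<omega>: "\<omega> \<in> (\<Inter>m. H m)"
    then have sp: "\<omega> \<in> space M" unfolding H_def by auto
    let ?r = "\<lambda>v. Rbar v \<omega>"
    have Fo: "F ?r" using \<omega> unfolding H_def by auto
    have rz: "reach ?r z"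
      unfolding reach_def
    proof (intro allI impI)
      fix k assume k: "k < length z"
      then have "take k z = replicate k 0" by (simp add: z_def)
      moreover have "1 \<le> ?r (replicate k 0)" using Fo k zl unfolding F_def by simp
      ultimately show "\<exists>i\<le>k. k + 1 - i \<le> ?r (take i z)" by (intro exI[of _ k]) simp
    qed
    have "\<exists>v\<in>tree_vertices d. length v = m \<and> reach ?r v" for m
    proof -
      have "G d n m ?r z" using \<omega> unfolding H_def by auto
      then obtain v where v: "v \<in> tree_vertices d" "length v = length z + m * n" "reach ?r v"
        using G_reach[OF zt rz] by blast
      have "m \<le> length v" using v(2) npos by (simp add: add_increasing)
      then show ?thesis using v tree_take reach_take by (intro bexI[of _ "take m v"]) auto
    qed
    then show "\<omega> \<in> {\<omega>\<in>space M. infinite (cone_reached d (\<lambda>u. Rbar u \<omega>))}"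
      using sp infinite_iff by blast
  qed
  then have L2: "prob (\<Inter>m. H m) \<le> prob {\<omega>\<in>space M. infinite (cone_reached d (\<lambda>u. Rbar u \<omega>))}"
    by (rule finite_measure_mono[OF _ target_meas])
  have L3: "0 < PF * \<delta>" by (rule mult_pos_pos[OF PFpos \<delta>pos])
  show ?thesis using L1 L2 L3 by linarith
qed

end

theorem theorem4:
  fixes d n :: nat
    and p :: "nat \<Rightarrow> nat pmf"
    and M :: "'a measure"
    and Rbar :: "nat list \<Rightarrow> 'a \<Rightarrow> nat"
  assumes "d \<ge> 2"
    and "prob_space M"
    and "\<And>z. pmf (p z) 0 < 1"
    and "prob_space.indep_vars M (\<lambda>_. count_space UNIV) Rbar (tree_vertices d)"
    and "\<And>u. u \<in> tree_vertices d \<Longrightarrow>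
           distr M (count_space UNIV) (Rbar u) = measure_pmf (p (length u))"
    and "n > 0"
    and "liminf (\<lambda>j. ereal (real d ^ n * (\<Prod>k<n. 1 - (\<Prod>i\<le>k.
           measure_pmf.prob (p (j * n + i)) {r. r < k + 1 - i})))) > 1"
  shows "measure M {\<omega> \<in> space M. infinite (cone_reached d (\<lambda>u. Rbar u \<omega>))} > 0"
proof -
  have ind: "indep_nat M Rbar (tree_vertices d)"
    unfolding indep_nat_def indep_nat_axioms_def using assms(2,4) by blast
  have "cone_setup M Rbar d n p"
    unfolding cone_setup_def cone_setup_axioms_def using ind assms(1,5,6) by blast
  then interpret cone_setup M Rbar d n p .
  show ?thesis
    by (rule positive[OF assms(3)]) (use assms(7) in \<open>simp add: Q_def\<close>)
qed

end
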